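(* Let $C$ be a linear code over $\mathbb{Z}_4$ of length $n$ and type $4^{k_1}2^{k_2}$, with generator matrix $G\in\mathbb{Z}_4^{(k_1+k_2)\times n}$. Suppose no column of $G$ lies in $(2\mathbb{Z}_4)^{k_1+k_2}$, and let $\mathbf{S}$ be a coset of $(2\mathbb{Z}_4)^{k_1+k_2}$ in $\mathbb{Z}_4^{k_1+k_2}$ other than $(2\mathbb{Z}_4)^{k_1+k_2}$ itself. Then $$\sum_{\mathbf{x}\in\mathbf{S}}w_L(\mathbf{x}G)=2^{k_1+k_2}n.$$
   Context: A linear code of length $n$ over $\mathbb{Z}_4$ is a $\mathbb{Z}_4$-submodule of $\mathbb{Z}_4^n$, of type $4^{k_1}2^{k_2}$ if isomorphic to $\mathbb{Z}_4^{k_1}\times\mathbb{Z}_2^{k_2}$. A generator matrix is a matrix whose rows generate the code and no proper subset of whose rows does. $2\mathbb{Z}_4=\{0,2\}$. Lee weight: $w_L(0)=0,w_L(1)=1,w_L(2)=2,w_L(3)=1$, additive on vectors. *)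

theory Defs
  imports "HOL-Library.Numeral_Type"
begin

text \<open>Z4 is the library ring type 4 (integers modulo 4). Vectors of length n over Z4
  are functions nat to 4 vanishing at all indices at least n.\<close>

definition vecs :: "nat \<Rightarrow> (nat \<Rightarrow> 4) set" where
  "vecs n = {v. \<forall>i. n \<le> i \<longrightarrow> v i = 0}"

definition two_vecs :: "nat \<Rightarrow> (nat \<Rightarrow> 4) set" where
  "two_vecs k = {v \<in> vecs k. \<forall>i. v i \<in> {0, 2}}"

definition vmul :: "nat \<Rightarrow> nat \<Rightarrow> (nat \<Rightarrow> 4) \<Rightarrow> (nat \<Rightarrow> nat \<Rightarrow> 4) \<Rightarrow> (nat \<Rightarrow> 4)" where
  "vmul k n x G = (\<lambda>j. if j < n then (\<Sum>i<k. x i * G i j) else 0)"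

definition row_span :: "nat \<Rightarrow> (nat \<Rightarrow> nat \<Rightarrow> 4) \<Rightarrow> nat set \<Rightarrow> (nat \<Rightarrow> 4) set" where
  "row_span n G I = {(\<lambda>j. if j < n then (\<Sum>i\<in>I. x i * G i j) else 0) | x. True}"

definition linear_code :: "nat \<Rightarrow> (nat \<Rightarrow> 4) set \<Rightarrow> bool" where
  "linear_code n C \<longleftrightarrow> C \<subseteq> vecs n \<and> (\<lambda>_. 0) \<in> C
     \<and> (\<forall>u\<in>C. \<forall>v\<in>C. (\<lambda>j. u j + v j) \<in> C)
     \<and> (\<forall>c. \<forall>u\<in>C. (\<lambda>j. c * u j) \<in> C)"

definition generator_matrix :: "nat \<Rightarrow> nat \<Rightarrow> (nat \<Rightarrow> nat \<Rightarrow> 4) \<Rightarrow> (nat \<Rightarrow> 4) set \<Rightarrow> bool" where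
  "generator_matrix k n G C \<longleftrightarrow> row_span n G {..<k} = C \<and> (\<forall>I. I \<subset> {..<k} \<longrightarrow> row_span n G I \<noteq> C)"

text \<open>Model of Z4^k1 x Z2^k2 as a Z4-module: Z2 is realised as the submodule {0,2} of Z4.\<close>
definition type_space :: "nat \<Rightarrow> nat \<Rightarrow> (nat \<Rightarrow> 4) set" where
  "type_space k1 k2 = {y \<in> vecs (k1 + k2). \<forall>i. k1 \<le> i \<longrightarrow> y i \<in> {0, 2}}"

definition has_type :: "(nat \<Rightarrow> 4) set \<Rightarrow> nat \<Rightarrow> nat \<Rightarrow> bool" where
  "has_type C k1 k2 \<longleftrightarrow> (\<exists>f. bij_betw f (type_space k1 k2) C
     \<and> (\<forall>x\<in>type_space k1 k2. \<forall>y\<in>type_space k1 k2. f (\<lambda>i. x i + y i) = (\<lambda>j. f x j + f y j))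
     \<and> (\<forall>c. \<forall>x\<in>type_space k1 k2. f (\<lambda>i. c * x i) = (\<lambda>j. c * f x j)))"

definition lee :: "4 \<Rightarrow> nat" where
  "lee a = (if a = 0 then 0 else if a = 2 then 2 else 1)"

definition lee_wt :: "nat \<Rightarrow> (nat \<Rightarrow> 4) \<Rightarrow> nat" where
  "lee_wt n v = (\<Sum>j<n. lee (v j))"

end

theory Submission
  imports Defs
begin

lemma c4: "(a::4) = 0 \<or> a = 1 \<or> a = 2 \<or> a = 3"
proof (cases a)
  case (of_int z)
  then have "z < 4" by simp
  with of_int have "z = 0 \<or> z = 1 \<or> z = 2 \<or> z = 3" by arith
  then show ?thesis using of_int by auto
qed

lemma lee_pair: "lee a + lee (a + 2) = 2"
  using c4[of a] by (elim disjE) (simp_all add: lee_def)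

lemma odd_two: "(g::4) \<notin> {0, 2} \<Longrightarrow> 2 * g = 2"
  using c4[of g] by (elim disjE) simp_all

lemma card_two_vecs: "card (two_vecs k) = 2 ^ k"
proof -
  let ?f = "\<lambda>A::nat set. (\<lambda>i. if i \<in> A then (2::4) else 0)"
  have inj: "inj_on ?f (Pow {..<k})"
  proof (rule inj_onI)
    fix A B assume eq: "?f A = ?f B"
    have "\<And>i. (i \<in> A) = (i \<in> B)"
    proof -
      fix i
      have "?f A i = ?f B i" using eq by (rule fun_cong)
      then show "(i \<in> A) = (i \<in> B)" by (simp split: if_splits)
    qed
    then show "A = B" by blast
  qed
  have img: "?f ` Pow {..<k} = two_vecs k"
  proof
    show "?f ` Pow {..<k} \<subseteq> two_vecs k"
      by (auto simp: two_vecs_def vecs_def)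
    show "two_vecs k \<subseteq> ?f ` Pow {..<k}"
    proof
      fix t assume t: "t \<in> two_vecs k"
      have "t = ?f {i. i < k \<and> t i = 2}"
      proof
        fix i show "t i = ?f {i. i < k \<and> t i = 2} i"
        proof (cases "i < k")
          case True
          then have "t i \<in> {0, 2}" using t by (simp add: two_vecs_def)
          then show ?thesis using True by auto
        next
          case False
          then show ?thesis using t by (simp add: two_vecs_def vecs_def)
        qed
      qed
      moreover have "{i. i < k \<and> t i = 2} \<in> Pow {..<k}" by auto
      ultimately show "t \<in> ?f ` Pow {..<k}" by blast
    qed
  qed
  have "card (two_vecs k) = card (Pow {..<k::nat})"
    using card_image[OF inj] img by simp
  also have "\<dots> = 2 ^ k" by (simp add: card_Pow)
  finally show ?thesis .
qed

lemma column_sum: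
  fixes g :: "nat \<Rightarrow> 4" and s :: "nat \<Rightarrow> 4"
  assumes i0: "i0 < k" "g i0 \<notin> {0, 2}"
  shows "(\<Sum>t\<in>two_vecs k. lee (\<Sum>i<k. (s i + t i) * g i)) = 2 ^ k"
proof -
  define f where "f t = (\<Sum>i<k. (s i + t i) * g i)" for t :: "nat \<Rightarrow> 4"
  define \<phi> where "\<phi> t = t(i0 := t i0 + 2)" for t :: "nat \<Rightarrow> 4"
  have phi_in: "\<phi> t \<in> two_vecs k" if "t \<in> two_vecs k" for t
  proof -
    have "t i0 + 2 \<in> {0, 2}" using that by (auto simp: two_vecs_def)
    then show ?thesis using that i0 by (auto simp: two_vecs_def vecs_def \<phi>_def)
  qed
  have phi_phi: "\<phi> (\<phi> t) = t" for t
    by (auto simp: \<phi>_def)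
  have f_phi: "f (\<phi> t) = f t + 2" for t
  proof -
    have "f (\<phi> t) = (\<Sum>i<k. (s i + t i) * g i + (if i = i0 then 2 * g i else 0))"
      unfolding f_def \<phi>_def by (rule sum.cong) (auto simp: algebra_simps)
    also have "\<dots> = f t + 2 * g i0"
      using i0 by (simp add: sum.distrib f_def)
    finally show ?thesis using odd_two[OF i0(2)] by simp
  qed
  have re: "(\<Sum>t\<in>two_vecs k. lee (f t)) = (\<Sum>t\<in>two_vecs k. lee (f (\<phi> t)))"
    by (rule sum.reindex_bij_witness[where i = \<phi> and j = \<phi>])
       (auto simp: phi_phi phi_in)
  have "2 * (\<Sum>t\<in>two_vecs k. lee (f t))
      = (\<Sum>t\<in>two_vecs k. lee (f t)) + (\<Sum>t\<in>two_vecs k. lee (f (\<phi> t)))"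
    using re by simp
  also have "\<dots> = (\<Sum>t\<in>two_vecs k. 2)"
    by (simp add: sum.distrib[symmetric] f_phi lee_pair)
  also have "\<dots> = 2 * 2 ^ k" by (simp add: card_two_vecs)
  finally show ?thesis unfolding f_def by simp
qed

theorem corollary3p7:
  fixes n k1 k2 :: nat and C :: "(nat \<Rightarrow> 4) set" and G :: "nat \<Rightarrow> nat \<Rightarrow> 4"
    and S :: "(nat \<Rightarrow> 4) set"
  assumes "linear_code n C"
    and "has_type C k1 k2"
    and "generator_matrix (k1 + k2) n G C"
    and "\<forall>j<n. \<exists>i<k1 + k2. G i j \<notin> {0, 2}"
    and "\<exists>s\<in>vecs (k1 + k2). S = {(\<lambda>i. s i + t i) | t. t \<in> two_vecs (k1 + k2)}"
    and "S \<noteq> two_vecs (k1 + k2)"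
  shows "(\<Sum>x\<in>S. lee_wt n (vmul (k1 + k2) n x G)) = 2 ^ (k1 + k2) * n"
proof -
  define k where "k = k1 + k2"
  obtain s where S: "S = (\<lambda>t. (\<lambda>i. s i + t i)) ` two_vecs k"
    using assms(5) unfolding k_def by blast
  have inj: "inj_on (\<lambda>t. (\<lambda>i. s i + t i)) (two_vecs k)"
  proof (rule inj_onI)
    fix t u assume "(\<lambda>i. s i + t i) = (\<lambda>i. s i + u i)"
    then have "\<And>i. s i + t i = s i + u i" by metis
    then show "t = u" by auto
  qed
  have "(\<Sum>x\<in>S. lee_wt n (vmul k n x G))
      = (\<Sum>t\<in>two_vecs k. lee_wt n (vmul k n (\<lambda>i. s i + t i) G))"
    unfolding S by (simp add: sum.reindex[OF inj])
  also have "\<dots> = (\<Sum>t\<in>two_vecs k. \<Sum>j<n. lee (\<Sum>i<k. (s i + t i) * G i j))"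
    by (simp add: lee_wt_def vmul_def)
  also have "\<dots> = (\<Sum>j<n. \<Sum>t\<in>two_vecs k. lee (\<Sum>i<k. (s i + t i) * G i j))"
    by (rule sum.swap)
  also have "\<dots> = (\<Sum>j<n. 2 ^ k)"
  proof (rule sum.cong[OF refl])
    fix j assume "j \<in> {..<n}"
    then obtain i0 where "i0 < k" "G i0 j \<notin> {0, 2}" using assms(4) k_def by auto
    then show "(\<Sum>t\<in>two_vecs k. lee (\<Sum>i<k. (s i + t i) * G i j)) = 2 ^ k"
      by (rule column_sum)
  qed
  finally show ?thesis by (simp add: k_def)
qed

end
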